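(* For every $k, \ell \in \mathbb{N}$, $$p_\ell^*(k) \leqslant \left( \frac{e^2 k}{\ell^2} \right)^{\ell}.$$
   Context: $p_\ell^*(k)$ denotes the number of partitions of $k$ into $\ell$ distinct parts, i.e. the number of sets $S \subset \mathbb{N} = \{1,2,\ldots\}$ with $|S| = \ell$ and $\sum_{a \in S} a = k$. *)

theory Defs
  imports Complex_Main
begin

definition distinct_partitions :: "nat \<Rightarrow> nat \<Rightarrow> nat" where
  "distinct_partitions l k = card {S :: nat set. S \<subseteq> {1..} \<and> finite S \<and> card S = l \<and> \<Sum>S = k}"

end

theory Submission
  imports Defs "HOL-Combinatorics.Multiset_Permutations"
begin

fun ps :: "nat list \<Rightarrow> nat set" where
  "ps [] = {}"
| "ps (x # xs) = insert x ((+) x ` ps xs)"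

lemma ps_ge: "y \<in> ps xs \<Longrightarrow> \<forall>z\<in>set xs. z > 0 \<Longrightarrow> y > 0"
  by (induction xs arbitrary: y) auto

lemma ps_finite: "finite (ps xs)"
  by (induction xs) auto

lemma ps_le: "y \<in> ps xs \<Longrightarrow> y \<le> sum_list xs"
  by (induction xs arbitrary: y) auto

lemma ps_sum: "xs \<noteq> [] \<Longrightarrow> sum_list xs \<in> ps xs"
proof (induction xs)
  case Nil then show ?case by simp
next
  case (Cons x xs)
  show ?case
  proof (cases "xs = []")
    case True then show ?thesis by simp
  next
    case False
    then have "sum_list xs \<in> ps xs" using Cons.IH by simp
    then show ?thesis by simp
  qed
qed

lemma ps_card: "\<forall>z\<in>set xs. z > 0 \<Longrightarrow> card (ps xs) = length xs"
proof (induction xs)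
  case Nil then show ?case by simp
next
  case (Cons x xs)
  have "x \<notin> (+) x ` ps xs" using ps_ge[of _ xs] Cons.prems by fastforce
  moreover have "card ((+) x ` ps xs) = card (ps xs)" by (simp add: card_image)
  ultimately show ?case using Cons by (simp add: ps_finite)
qed

lemma ps_inj: "\<forall>z\<in>set xs. z > 0 \<Longrightarrow> \<forall>z\<in>set ys. z > 0 \<Longrightarrow> ps xs = ps ys \<Longrightarrow> xs = ys"
proof (induction xs arbitrary: ys)
  case Nil
  then show ?case by (cases ys) auto
next
  case (Cons x xs)
  show ?case
  proof (cases ys)
    case Nil then show ?thesis using Cons by simp
  next
    case (Cons y ys')
    have mx: "\<forall>u\<in>ps (x#xs). x \<le> u" by auto
    have my: "\<forall>u\<in>ps (y#ys'). y \<le> u" by auto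
    have "x \<in> ps (y#ys')" "y \<in> ps (x#xs)" using Cons Cons.prems by auto
    hence xy: "x = y" using mx my Cons Cons.prems by (metis le_antisym)
    have nx: "x \<notin> (+) x ` ps xs" using ps_ge[of _ xs] Cons.prems by fastforce
    have ny: "x \<notin> (+) x ` ps ys'" using ps_ge[of _ ys'] Cons.prems Cons xy by fastforce
    have "(+) x ` ps xs = (+) x ` ps ys'"
    proof -
      have "(+) x ` ps xs = ps (x#xs) - {x}" using nx by auto
      also have "\<dots> = ps (y#ys') - {x}" using Cons Cons.prems by simp
      also have "\<dots> = (+) x ` ps ys'" using ny xy by auto
      finally show ?thesis .
    qed
    hence "ps xs = ps ys'" by (simp add: inj_image_eq_iff)
    hence "xs = ys'" using Cons.IH Cons.prems Cons by auto
    then show ?thesis using xy Cons by simp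
  qed
qed

lemma fact_choose_le: "fact l * (k choose l) \<le> (k::nat) ^ l"
proof (induction l arbitrary: k)
  case 0 then show ?case by simp
next
  case (Suc l)
  show ?case
  proof (cases k)
    case 0 then show ?thesis by simp
  next
    case (Suc n)
    have "fact (Suc l) * (k choose Suc l) = fact l * (Suc l * (Suc n choose Suc l))"
      using Suc by (simp add: algebra_simps)
    also have "Suc l * (Suc n choose Suc l) = Suc n * (n choose l)"
      by (metis Suc_times_binomial_eq mult.commute)
    also have "fact l * (Suc n * (n choose l)) = Suc n * (fact l * (n choose l))" by (simp add: algebra_simps)
    also have "\<dots> \<le> Suc n * n ^ l" by (intro mult_le_mono2 Suc.IH)
    also have "\<dots> \<le> Suc n * Suc n ^ l" by (intro mult_le_mono2 power_mono) auto
    finally show ?thesis using Suc by simp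
  qed
qed

lemma pow_fact_exp: "(real l) ^ l / fact l \<le> exp (real l)"
proof -
  have s: "summable (\<lambda>n. real l ^ n / fact n)"
    using summable_exp[of "real l"] by (simp add: field_simps)
  have "exp (real l) = (\<Sum>n. real l ^ n / fact n)"
    using exp_converges[of "real l"] by (simp add: sums_iff field_simps)
  moreover have "(\<Sum>n\<in>{l}. real l ^ n / fact n) \<le> (\<Sum>n. real l ^ n / fact n)"
    by (rule sum_le_suminf[OF s]) auto
  ultimately show ?thesis by simp
qed

theorem lemma5p1:
  fixes k l :: nat
  assumes "k \<ge> 1" and "l \<ge> 1"
  shows "real (distinct_partitions l k) \<le> (exp 2 * real k / (real l)^2) ^ l"
proof -
  define F where "F = {S :: nat set. S \<subseteq> {1..} \<and> finite S \<and> card S = l \<and> \<Sum>S = k}"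
  have Fsub: "F \<subseteq> Pow {1..k}"
  proof
    fix S assume "S \<in> F"
    hence S: "S \<subseteq> {1..}" "finite S" "\<Sum>S = k" by (auto simp: F_def)
    have "\<forall>x\<in>S. x \<le> k" using S member_le_sum[of _ S id] by auto
    thus "S \<in> Pow {1..k}" using S by auto
  qed
  have finF: "finite F" using Fsub finite_subset by blast
  define L where "L = (\<Union>S\<in>F. permutations_of_set S)"
  have cardL: "card L = card F * fact l"
  proof -
    have "card L = (\<Sum>S\<in>F. card (permutations_of_set S))"
      unfolding L_def
      by (rule card_UN_disjoint[OF finF]) (simp, auto simp: permutations_of_set_def)
    also have "\<dots> = (\<Sum>S\<in>F. fact l)"
      by (rule sum.cong) (auto simp: F_def)
    finally show ?thesis by simp
  qed
  define A where "A = {B. B \<subseteq> {1..k} \<and> card B = l \<and> k \<in> B}"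
  have maps: "ps ` L \<subseteq> A"
  proof
    fix B assume "B \<in> ps ` L"
    then obtain xs S where xs: "B = ps xs" "S \<in> F" "set xs = S" "distinct xs"
      unfolding L_def permutations_of_set_def by auto
    have pos: "\<forall>z\<in>set xs. z > 0" using xs by (auto simp: F_def)
    have len: "length xs = l" using xs distinct_card[of xs] by (auto simp: F_def)
    have sk: "sum_list xs = k" using xs distinct_sum_list_conv_Sum[of xs] by (auto simp: F_def)
    have ne: "xs \<noteq> []" using len assms by auto
    have sub: "ps xs \<subseteq> {1..k}"
    proof
      fix y assume y: "y \<in> ps xs"
      have "y > 0" by (rule ps_ge[OF y pos])
      moreover have "y \<le> k" using ps_le[OF y] sk by simp
      ultimately show "y \<in> {1..k}" by simp
    qed
    have c: "card (ps xs) = l" using ps_card[OF pos] len by simp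
    have kin: "k \<in> ps xs" using ps_sum[OF ne] sk by simp
    show "B \<in> A" unfolding A_def using sub c kin xs(1) by blast
  qed
  have inj: "inj_on ps L"
  proof (rule inj_onI)
    fix xs ys assume "xs \<in> L" "ys \<in> L" "ps xs = ps ys"
    moreover have "\<forall>z\<in>set xs. z > 0" if "xs \<in> L" for xs
      using that unfolding L_def permutations_of_set_def F_def by auto
    ultimately show "xs = ys" using ps_inj by blast
  qed
  have finA: "finite A" unfolding A_def by auto
  have cardA: "card A = (k - 1) choose (l - 1)"
  proof -
    have "A = insert k ` {B. B \<subseteq> {1..k-1} \<and> card B = l - 1}"
    proof
      show "A \<subseteq> insert k ` {B. B \<subseteq> {1..k-1} \<and> card B = l - 1}"
      proof
        fix B assume B: "B \<in> A"
        hence "B = insert k (B - {k})" by (auto simp: A_def)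
        moreover have "B - {k} \<subseteq> {1..k-1}" using B by (auto simp: A_def)
        moreover have "card (B - {k}) = l - 1" using B finite_subset[of B "{1..k}"]
          by (auto simp: A_def card_Diff_singleton)
        ultimately show "B \<in> insert k ` {B. B \<subseteq> {1..k-1} \<and> card B = l - 1}" by blast
      qed
    next
      show "insert k ` {B. B \<subseteq> {1..k-1} \<and> card B = l - 1} \<subseteq> A"
      proof
        fix B assume "B \<in> insert k ` {B. B \<subseteq> {1..k-1} \<and> card B = l - 1}"
        then obtain C where C: "B = insert k C" "C \<subseteq> {1..k-1}" "card C = l - 1" by auto
        have "k \<notin> C" using C assms by auto
        moreover have "finite C" using C finite_subset by blast
        moreover have "C \<subseteq> {1..k}" using C(2) by (auto simp: subset_iff)
        ultimately show "B \<in> A" unfolding A_def using C(1,3) assms by simp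
      qed
    qed
    moreover have "inj_on (insert k) {B. B \<subseteq> {1..k-1} \<and> card B = l - 1}"
    proof (rule inj_onI)
      fix x y assume x: "x \<in> {B. B \<subseteq> {1..k-1} \<and> card B = l - 1}"
        and y: "y \<in> {B. B \<subseteq> {1..k-1} \<and> card B = l - 1}" and e: "insert k x = insert k y"
      have "k \<notin> x" "k \<notin> y" using x y assms by auto
      then show "x = y" using e by (metis Diff_insert_absorb)
    qed
    ultimately have "card A = card {B. B \<subseteq> {1..k-1} \<and> card B = l - 1}"
      by (simp add: card_image)
    also have "\<dots> = (k - 1) choose (l - 1)" using n_subsets[of "{1..k-1}"] by simp
    finally show ?thesis .
  qed
  have "card F * fact l \<le> (k - 1) choose (l - 1)"
    using card_inj_on_le[OF inj maps finA] cardL cardA by simp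
  also have "\<dots> \<le> k choose l"
    using assms binomial_Suc_Suc[of "k-1" "l-1"] by simp
  finally have "card F * fact l * fact l \<le> fact l * (k choose l)" by simp
  also have "\<dots> \<le> k ^ l" by (rule fact_choose_le)
  finally have key: "real (card F) * (fact l * fact l) \<le> real k ^ l"
    by (metis (mono_tags) of_nat_fact of_nat_le_iff of_nat_mult of_nat_power mult.assoc)
  have fl: "(real l / exp 1) ^ l \<le> fact l"
  proof -
    have "exp (real l) = exp 1 ^ l" by (simp add: exp_of_nat_mult[symmetric])
    then show ?thesis using pow_fact_exp[of l]
      by (simp add: power_divide divide_simps mult.commute)
  qed
  define a where "a = real l / exp 1"
  have aa: "a ^ l * a ^ l = ((real l)^2 / exp 2) ^ l"
  proof -
    have e2: "exp 1 * exp 1 = exp (2::real)" by (simp add: exp_add[symmetric])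
    have "a ^ l * a ^ l = (a * a) ^ l" by (metis power_mult_distrib)
    moreover have "a * a = (real l)^2 / exp 2" unfolding a_def by (simp add: power2_eq_square e2[symmetric])
    ultimately show ?thesis by simp
  qed
  have "real (card F) * (a ^ l * a ^ l) \<le> real (card F) * (fact l * fact l)"
    unfolding a_def by (intro mult_left_mono mult_mono fl) auto
  hence ineq: "real (card F) * ((real l)^2 / exp 2) ^ l \<le> real k ^ l"
    using key aa by (metis order_trans)
  have qpos: "((real l)^2 / exp 2) ^ l > 0" using assms by simp
  have "real (card F) \<le> real k ^ l / ((real l)^2 / exp 2) ^ l"
    using ineq qpos by (simp add: pos_le_divide_eq)
  also have "\<dots> = (real k / ((real l)^2 / exp 2)) ^ l" by (rule power_divide[symmetric])
  also have "real k / ((real l)^2 / exp 2) = exp 2 * real k / (real l)^2" by simp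
  finally show ?thesis by (simp add: distinct_partitions_def F_def)
qed

end
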